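(* Let $1\to K\to G\xrightarrow{p} Q\to 1$ be an exact sequence of groups, where $K$ is a torsion group (so $p:G\to Q$ is a surjection with kernel $K$). Then an element $g\in G$ is a genuine generalized torsion element of $G$ if and only if $p(g)$ is a genuine generalized torsion element of $Q$.
   Context: For $g,x$ in a group, $g^{x}:=xgx^{-1}$. A non-trivial element $g$ of a group $G$ is a generalized torsion element if there exist a positive integer $n$ and $x_1,\ldots,x_n\in G$ with $g^{x_1}g^{x_2}\cdots g^{x_n}=1$. A generalized torsion element is genuine if it is not a torsion element. A torsion group is a group all of whose elements have finite order. *)

theory Defs
  imports "HOL-Algebra.Algebra"
begin

definition conj_by :: "('a, 'm) monoid_scheme \<Rightarrow> 'a \<Rightarrow> 'a \<Rightarrow> 'a" where
  "conj_by G g x = x \<otimes>\<^bsub>G\<^esub> g \<otimes>\<^bsub>G\<^esub> inv\<^bsub>G\<^esub> x"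

definition conj_prod :: "('a, 'm) monoid_scheme \<Rightarrow> 'a \<Rightarrow> 'a list \<Rightarrow> 'a" where
  "conj_prod G g xs = foldr (\<lambda>x acc. conj_by G g x \<otimes>\<^bsub>G\<^esub> acc) xs \<one>\<^bsub>G\<^esub>"

definition torsion_element :: "('a, 'm) monoid_scheme \<Rightarrow> 'a \<Rightarrow> bool" where
  "torsion_element G g \<longleftrightarrow> g \<in> carrier G \<and> (\<exists>n::nat. n > 0 \<and> g [^]\<^bsub>G\<^esub> n = \<one>\<^bsub>G\<^esub>)"

definition torsion_group :: "('a, 'm) monoid_scheme \<Rightarrow> 'a set \<Rightarrow> bool" where
  "torsion_group G K \<longleftrightarrow> (\<forall>g\<in>K. torsion_element G g)"

definition generalized_torsion :: "('a, 'm) monoid_scheme \<Rightarrow> 'a \<Rightarrow> bool" where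
  "generalized_torsion G g \<longleftrightarrow> g \<in> carrier G \<and> g \<noteq> \<one>\<^bsub>G\<^esub> \<and>
     (\<exists>xs. length xs > 0 \<and> set xs \<subseteq> carrier G \<and> conj_prod G g xs = \<one>\<^bsub>G\<^esub>)"

definition genuine_generalized_torsion :: "('a, 'm) monoid_scheme \<Rightarrow> 'a \<Rightarrow> bool" where
  "genuine_generalized_torsion G g \<longleftrightarrow> generalized_torsion G g \<and> \<not> torsion_element G g"

end

theory Submission
  imports Defs
begin

lemma conj_prod_closed:
  assumes "group G" "g \<in> carrier G" "set xs \<subseteq> carrier G"
  shows "conj_prod G g xs \<in> carrier G"
  using assms(3)
proof (induction xs)
  case Nil then show ?case using assms by (simp add: conj_prod_def group.is_monoid monoid.one_closed)
next
  case (Cons x xs)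
  then show ?case using assms
    by (simp add: conj_prod_def conj_by_def group.is_monoid monoid.m_closed group.inv_closed)
qed

lemma conj_prod_append:
  assumes "group G" "g \<in> carrier G" "set xs \<subseteq> carrier G" "set ys \<subseteq> carrier G"
  shows "conj_prod G g (xs @ ys) = conj_prod G g xs \<otimes>\<^bsub>G\<^esub> conj_prod G g ys"
  using assms(3)
proof (induction xs)
  case Nil then show ?case using assms conj_prod_closed[OF assms(1,2,4)]
    by (simp add: conj_prod_def group.is_monoid monoid.l_one)
next
  case (Cons x xs)
  interpret group G by fact
  have c: "conj_by G g x \<in> carrier G" using Cons assms by (simp add: conj_by_def)
  have "conj_prod G g ((x # xs) @ ys) = conj_by G g x \<otimes>\<^bsub>G\<^esub> conj_prod G g (xs @ ys)"
    by (simp add: conj_prod_def)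
  also have "\<dots> = conj_by G g x \<otimes>\<^bsub>G\<^esub> (conj_prod G g xs \<otimes>\<^bsub>G\<^esub> conj_prod G g ys)" using Cons by simp
  also have "\<dots> = (conj_by G g x \<otimes>\<^bsub>G\<^esub> conj_prod G g xs) \<otimes>\<^bsub>G\<^esub> conj_prod G g ys"
    using c conj_prod_closed[OF assms(1,2)] Cons assms by (simp add: m_assoc)
  also have "\<dots> = conj_prod G g (x # xs) \<otimes>\<^bsub>G\<^esub> conj_prod G g ys" by (simp add: conj_prod_def)
  finally show ?case .
qed

lemma conj_prod_rep:
  assumes "group G" "g \<in> carrier G" "set xs \<subseteq> carrier G"
  shows "conj_prod G g (concat (replicate m xs)) = conj_prod G g xs [^]\<^bsub>G\<^esub> m"
proof (induction m)
  case 0 then show ?case by (simp add: conj_prod_def)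
next
  case (Suc m)
  interpret group G by fact
  have s: "set (concat (replicate m xs)) \<subseteq> carrier G" using assms by auto
  have "conj_prod G g (concat (replicate (Suc m) xs)) = conj_prod G g xs \<otimes>\<^bsub>G\<^esub> conj_prod G g xs [^]\<^bsub>G\<^esub> m"
    using conj_prod_append[OF assms s] Suc by simp
  also have "\<dots> = conj_prod G g xs [^]\<^bsub>G\<^esub> Suc m"
    using conj_prod_closed[OF assms] nat_pow_Suc2 by metis
  finally show ?case .
qed

lemma conj_prod_hom:
  assumes "group G" "group Q" "p \<in> hom G Q" "g \<in> carrier G" "set xs \<subseteq> carrier G"
  shows "p (conj_prod G g xs) = conj_prod Q (p g) (map p xs)"
  using assms(5)
proof (induction xs)
  case Nil
  interpret group_hom G Q p using assms by (simp add: group_hom_def group_hom_axioms_def)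
  show ?case by (simp add: conj_prod_def)
next
  case (Cons x xs)
  interpret group_hom G Q p using assms by (simp add: group_hom_def group_hom_axioms_def)
  have c: "conj_by G g x \<in> carrier G" using Cons assms by (simp add: conj_by_def)
  have "p (conj_prod G g (x # xs)) = p (conj_by G g x) \<otimes>\<^bsub>Q\<^esub> p (conj_prod G g xs)"
    using c conj_prod_closed[OF assms(1,4)] Cons by (simp add: conj_prod_def)
  also have "p (conj_by G g x) = conj_by Q (p g) (p x)"
    using Cons assms by (simp add: conj_by_def)
  finally show ?case using Cons by (simp add: conj_prod_def)
qed

theorem theorem1p3:
  fixes G :: "('a, 'm) monoid_scheme" and Q :: "('b, 'n) monoid_scheme" and p :: "'a \<Rightarrow> 'b"
  assumes "group G" and "group Q"
    and "p \<in> hom G Q" and "p ` carrier G = carrier Q"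
    and "torsion_group G (kernel G Q p)"
    and "g \<in> carrier G"
  shows "genuine_generalized_torsion G g \<longleftrightarrow> genuine_generalized_torsion Q (p g)"
proof -
  interpret G: group G by fact
  interpret Q: group Q by fact
  interpret group_hom G Q p using assms by (simp add: group_hom_def group_hom_axioms_def)
  have ker: "\<And>x. x \<in> carrier G \<Longrightarrow> p x = \<one>\<^bsub>Q\<^esub> \<Longrightarrow> \<exists>m>0. x [^]\<^bsub>G\<^esub> (m::nat) = \<one>\<^bsub>G\<^esub>"
    using assms(5) by (auto simp: torsion_group_def torsion_element_def kernel_def)
  have tor_iff: "torsion_element G g \<longleftrightarrow> torsion_element Q (p g)"
  proof
    assume "torsion_element G g"
    then obtain n where "n > 0" "g [^]\<^bsub>G\<^esub> (n::nat) = \<one>\<^bsub>G\<^esub>" by (auto simp: torsion_element_def)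
    then show "torsion_element Q (p g)" using assms(6) hom_nat_pow[of g n]
      by (auto simp: torsion_element_def)
  next
    assume "torsion_element Q (p g)"
    then obtain n where n: "n > 0" "p g [^]\<^bsub>Q\<^esub> (n::nat) = \<one>\<^bsub>Q\<^esub>" by (auto simp: torsion_element_def)
    then have "p (g [^]\<^bsub>G\<^esub> n) = \<one>\<^bsub>Q\<^esub>" using assms(6) hom_nat_pow by simp
    then obtain m where m: "m > 0" "(g [^]\<^bsub>G\<^esub> n) [^]\<^bsub>G\<^esub> (m::nat) = \<one>\<^bsub>G\<^esub>"
      using ker assms(6) by blast
    then have "g [^]\<^bsub>G\<^esub> (n * m) = \<one>\<^bsub>G\<^esub>" using assms(6) G.nat_pow_pow by simp
    then show "torsion_element G g" using n m assms(6) unfolding torsion_element_def by (intro conjI exI[of _ "n*m"]) auto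
  qed
  show ?thesis
  proof
    assume A: "genuine_generalized_torsion G g"
    then have nt: "\<not> torsion_element Q (p g)" using tor_iff by (simp add: genuine_generalized_torsion_def)
    have "p g \<noteq> \<one>\<^bsub>Q\<^esub>" using nt by (auto simp: torsion_element_def intro: exI[of _ 1])
    moreover obtain xs where xs: "length xs > 0" "set xs \<subseteq> carrier G" "conj_prod G g xs = \<one>\<^bsub>G\<^esub>"
      using A by (auto simp: genuine_generalized_torsion_def generalized_torsion_def)
    moreover have "conj_prod Q (p g) (map p xs) = \<one>\<^bsub>Q\<^esub>"
      using conj_prod_hom[OF assms(1,2,3,6) xs(2)] xs(3) by simp
    moreover have "set (map p xs) \<subseteq> carrier Q" using xs(2) by auto
    ultimately show "genuine_generalized_torsion Q (p g)" using nt assms(6)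
      unfolding genuine_generalized_torsion_def generalized_torsion_def
      using assms(6) by (intro conjI exI[of _ "map p xs"]) auto
  next
    assume A: "genuine_generalized_torsion Q (p g)"
    then have nt: "\<not> torsion_element G g" using tor_iff by (simp add: genuine_generalized_torsion_def)
    have "g \<noteq> \<one>\<^bsub>G\<^esub>" using nt by (auto simp: torsion_element_def intro: exI[of _ 1])
    obtain ys where ys: "length ys > 0" "set ys \<subseteq> carrier Q" "conj_prod Q (p g) ys = \<one>\<^bsub>Q\<^esub>"
      using A by (auto simp: genuine_generalized_torsion_def generalized_torsion_def)
    define xs where "xs = map (inv_into (carrier G) p) ys"
    have xsc: "set xs \<subseteq> carrier G" using ys(2) assms(4) unfolding xs_def
      by (auto intro!: inv_into_into)
    have mp: "map p xs = ys" unfolding xs_def using ys(2) assms(4)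
      by (auto simp: map_idI f_inv_into_f intro!: map_idI)
    have "p (conj_prod G g xs) = \<one>\<^bsub>Q\<^esub>" using conj_prod_hom[OF assms(1,2,3,6) xsc] mp ys(3) by simp
    then obtain m where m: "m > 0" "conj_prod G g xs [^]\<^bsub>G\<^esub> (m::nat) = \<one>\<^bsub>G\<^esub>"
      using ker conj_prod_closed[OF assms(1,6) xsc] by blast
    define zs where "zs = concat (replicate m xs)"
    have "conj_prod G g zs = \<one>\<^bsub>G\<^esub>" using conj_prod_rep[OF assms(1,6) xsc] m zs_def by simp
    moreover have "set zs \<subseteq> carrier G" using xsc m by (auto simp: zs_def)
    moreover have "length zs > 0" using m ys(1) by (simp add: zs_def xs_def length_concat sum_list_replicate)
    ultimately show "genuine_generalized_torsion G g" using nt assms(6) \<open>g \<noteq> _\<close>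
      unfolding genuine_generalized_torsion_def generalized_torsion_def by blast
  qed
qed

end
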